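(* Let $T$ be a tree and $S$ a labeling of $T$ such that $(T,S)\in\mathscr{T}_2$. Then $\gamma^{d}_2(T)=\frac{n(T)+s(T)+l(T)}{4}$.
   Context: Graphs are finite and simple. For a vertex $v$ of a graph $G$, $N(v)$ is its open neighborhood, $N[v]=N(v)\cup\{v\}$, $d(v)=|N(v)|$. A leaf is a vertex of degree $1$; a support vertex is a vertex adjacent to a leaf. For a tree $T$, $n(T)$, $l(T)$, $s(T)$ denote its order, number of leaves and number of support vertices. A set $D\subseteq V(G)$ is a disjunctive dominating set ($2DD$-set) of $G$ if every vertex $v\notin D$ either has a neighbor in $D$ or has at least two vertices of $D$ at distance exactly $2$ from it. $\gamma^{d}_2(G)$ is the minimum size of a $2DD$-set. Labeled trees: a labeling of a tree $T$ is a partition $S=(S_A,S_B,S_C,S_D)$ of $V(T)$ into four (possibly empty) sets; $\mathrm{sta}(v)$ is the letter $x$ with $v\in S_x$. The family $\mathscr{T}_2$ is built from the starting labeled tree $(P_4,S'')$, where $S''$ gives the two leaves of $P_4$ status $C$ and the two internal vertices status $A$; in any tree built from it, this original $P_4$ is called the basic path. Corresponding vertices: if $v$ is a vertex with $\mathrm{sta}(v)=A$ that is not a support vertex and not on the basic path, a vertex $u$ is a corresponding vertex of $v$ if there is an induced path $vv_1v_2u$ with $\mathrm{sta}(v_1)=C$, $\mathrm{sta}(v_2)=D$, $\mathrm{sta}(u)=B$; if $\mathrm{sta}(u)=B$, a vertex $v$ is a corresponding vertex of $u$ if there is an induced path $vv_1v_2u$ with $\mathrm{sta}(v)=A$, $\mathrm{sta}(v_1)=C$,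 $\mathrm{sta}(v_2)=D$. Operation $\mathscr{O}_2$: choose $v$ with $\mathrm{sta}(v)=B$ having a corresponding vertex of degree two; add a new path $u_1u_2$ and the edge $u_1v$, with $\mathrm{sta}(u_1)=A$, $\mathrm{sta}(u_2)=C$. Operation $\mathscr{O}_3$: choose $v$ with $\mathrm{sta}(v)=C$ and $d(v)=1$; add a new path $u_1u_2u_3u_4$ and the edge $u_1v$, with $\mathrm{sta}(u_1)=D$, $\mathrm{sta}(u_2)=B$, $\mathrm{sta}(u_3)=A$, $\mathrm{sta}(u_4)=C$. Operation $\mathscr{O}_4$: choose $v$ not on the basic path with $\mathrm{sta}(v)=A$ having a corresponding vertex of degree two; add a new path $u_1u_2$ and the edge $u_1v$, with $\mathrm{sta}(u_1)=A$, $\mathrm{sta}(u_2)=C$. (Existing vertices keep their statuses.) $\mathscr{T}_2$ is the smallest family of labeled trees containing $(P_4,S'')$ and closed under $\mathscr{O}_2$, $\mathscr{O}_3$, $\mathscr{O}_4$. *)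

theory Defs
  imports Main "HOL-Library.Multiset" Complex_Main
begin

datatype status = SA | SB | SC | SD

definition adj :: "'a set set \<Rightarrow> 'a \<Rightarrow> 'a \<Rightarrow> bool" where
  "adj E u v \<longleftrightarrow> u \<noteq> v \<and> {u, v} \<in> E"

definition deg :: "'a set \<Rightarrow> 'a set set \<Rightarrow> 'a \<Rightarrow> nat" where
  "deg V E v = card {u \<in> V. adj E v u}"

definition leaves :: "'a set \<Rightarrow> 'a set set \<Rightarrow> 'a set" where
  "leaves V E = {v \<in> V. deg V E v = 1}"

definition supports :: "'a set \<Rightarrow> 'a set set \<Rightarrow> 'a set" where
  "supports V E = {v \<in> V. \<exists>u \<in> leaves V E. adj E v u}"

definition dist2 :: "'a set \<Rightarrow> 'a set set \<Rightarrow> 'a \<Rightarrow> 'a \<Rightarrow> bool" where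
  "dist2 V E u v \<longleftrightarrow> u \<noteq> v \<and> \<not> adj E u v \<and> (\<exists>w \<in> V. adj E u w \<and> adj E w v)"

definition is_2DD :: "'a set \<Rightarrow> 'a set set \<Rightarrow> 'a set \<Rightarrow> bool" where
  "is_2DD V E D \<longleftrightarrow> D \<subseteq> V \<and>
     (\<forall>v \<in> V - D. (\<exists>u \<in> D. adj E v u) \<or>
        (\<exists>u \<in> D. \<exists>w \<in> D. u \<noteq> w \<and> dist2 V E v u \<and> dist2 V E v w))"

definition gamma2d :: "'a set \<Rightarrow> 'a set set \<Rightarrow> nat" where
  "gamma2d V E = (LEAST k. \<exists>D. is_2DD V E D \<and> card D = k)"

definition induced_P4 :: "'a set set \<Rightarrow> 'a \<Rightarrow> 'a \<Rightarrow> 'a \<Rightarrow> 'a \<Rightarrow> bool" where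
  "induced_P4 E a b c d \<longleftrightarrow> distinct [a, b, c, d] \<and>
     adj E a b \<and> adj E b c \<and> adj E c d \<and>
     \<not> adj E a c \<and> \<not> adj E a d \<and> \<not> adj E b d"

definition corr_of_A :: "'a set \<Rightarrow> 'a set set \<Rightarrow> ('a \<Rightarrow> status) \<Rightarrow> 'a set \<Rightarrow> 'a \<Rightarrow> 'a \<Rightarrow> bool" where
  "corr_of_A V E S P v u \<longleftrightarrow> v \<in> V \<and> S v = SA \<and> v \<notin> supports V E \<and> v \<notin> P \<and>
     (\<exists>v1 v2. induced_P4 E v v1 v2 u \<and> S v1 = SC \<and> S v2 = SD \<and> S u = SB)"

definition corr_of_B :: "'a set \<Rightarrow> 'a set set \<Rightarrow> ('a \<Rightarrow> status) \<Rightarrow> 'a \<Rightarrow> 'a \<Rightarrow> bool" where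
  "corr_of_B V E S u v \<longleftrightarrow> u \<in> V \<and> S u = SB \<and>
     (\<exists>v1 v2. induced_P4 E v v1 v2 u \<and> S v = SA \<and> S v1 = SC \<and> S v2 = SD)"

(* T2 V E S P : labeled tree (V,E,S) in the family, with basic path P.
   The labeling S is only relevant on V. *)
inductive T2 :: "'a set \<Rightarrow> 'a set set \<Rightarrow> ('a \<Rightarrow> status) \<Rightarrow> 'a set \<Rightarrow> bool" where
  base: "\<lbrakk> distinct [a, b, c, d]; S a = SC; S b = SA; S c = SA; S d = SC \<rbrakk> \<Longrightarrow>
         T2 {a, b, c, d} {{a, b}, {b, c}, {c, d}} S {a, b, c, d}"
| O2: "\<lbrakk> T2 V E S P; v \<in> V; S v = SB;
         \<exists>w \<in> V. corr_of_B V E S v w \<and> deg V E w = 2;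
         u1 \<notin> V; u2 \<notin> V; u1 \<noteq> u2 \<rbrakk> \<Longrightarrow>
         T2 (V \<union> {u1, u2}) (E \<union> {{u1, u2}, {u1, v}}) (S(u1 := SA, u2 := SC)) P"
| O3: "\<lbrakk> T2 V E S P; v \<in> V; S v = SC; deg V E v = 1;
         distinct [u1, u2, u3, u4]; u1 \<notin> V; u2 \<notin> V; u3 \<notin> V; u4 \<notin> V \<rbrakk> \<Longrightarrow>
         T2 (V \<union> {u1, u2, u3, u4}) (E \<union> {{u1, u2}, {u2, u3}, {u3, u4}, {u1, v}})
            (S(u1 := SD, u2 := SB, u3 := SA, u4 := SC)) P"
| O4: "\<lbrakk> T2 V E S P; v \<in> V; v \<notin> P; S v = SA;
         \<exists>w \<in> V. corr_of_A V E S P v w \<and> deg V E w = 2;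
         u1 \<notin> V; u2 \<notin> V; u1 \<noteq> u2 \<rbrakk> \<Longrightarrow>
         T2 (V \<union> {u1, u2}) (E \<union> {{u1, u2}, {u1, v}}) (S(u1 := SA, u2 := SC)) P"

end

theory Submission
  imports Defs
begin


definition nb :: "'a set \<Rightarrow> 'a set set \<Rightarrow> 'a \<Rightarrow> 'a set" where
  "nb V E v = {u\<in>V. adj E v u}"

lemma adj_sym: "adj E u v = adj E v u"
  unfolding adj_def by (auto simp: insert_commute)

lemma nb_sym: "u \<in> nb V E v \<Longrightarrow> v \<in> V \<Longrightarrow> v \<in> nb V E u"
  unfolding nb_def using adj_sym by fastforce

lemma nb_sub: "nb V E v \<subseteq> V" unfolding nb_def by auto

lemma deg_nb: "deg V E v = card (nb V E v)" unfolding deg_def nb_def by simp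

lemma nb_not_self: "v \<notin> nb V E v" unfolding nb_def adj_def by auto

context
  fixes V :: "'a set" and E u1 u2 v
  assumes EV: "\<forall>e\<in>E. e \<subseteq> V" and v: "v \<in> V" and u1: "u1 \<notin> V" and u2: "u2 \<notin> V"
    and u12: "u1 \<noteq> u2"
begin

lemma adjP_old: "z \<in> V \<Longrightarrow> u \<in> V \<Longrightarrow> adj (E \<union> {{u1, u2}, {u1, v}}) z u = adj E z u"
  using EV u1 u2 unfolding adj_def by (auto simp: doubleton_eq_iff)

lemma nbP_old: "z \<in> V \<Longrightarrow> z \<noteq> v \<Longrightarrow> nb (V \<union> {u1,u2}) (E \<union> {{u1, u2}, {u1, v}}) z = nb V E z"
  using EV u1 u2 unfolding nb_def adj_def by (auto simp: doubleton_eq_iff)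

lemma nbP_v: "nb (V \<union> {u1,u2}) (E \<union> {{u1, u2}, {u1, v}}) v = insert u1 (nb V E v)"
  using EV u1 u2 v unfolding nb_def adj_def by (auto simp: doubleton_eq_iff)

lemma nbP_u1: "nb (V \<union> {u1,u2}) (E \<union> {{u1, u2}, {u1, v}}) u1 = {u2, v}"
  using EV u1 u2 v u12 unfolding nb_def adj_def by (auto simp: doubleton_eq_iff)

lemma nbP_u2: "nb (V \<union> {u1,u2}) (E \<union> {{u1, u2}, {u1, v}}) u2 = {u1}"
  using EV u1 u2 v u12 unfolding nb_def adj_def by (auto simp: doubleton_eq_iff)

end

context
  fixes V :: "'a set" and E u1 u2 u3 u4 v
  assumes EV: "\<forall>e\<in>E. e \<subseteq> V" and v: "v \<in> V" and dist: "distinct [u1,u2,u3,u4]"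
   and u1: "u1 \<notin> V" and u2: "u2 \<notin> V" and u3: "u3 \<notin> V" and u4: "u4 \<notin> V"
begin

abbreviation "V3 \<equiv> V \<union> {u1,u2,u3,u4}"
abbreviation "E3 \<equiv> E \<union> {{u1, u2}, {u2, u3}, {u3, u4}, {u1, v}}"

lemma adj3_old: "z \<in> V \<Longrightarrow> u \<in> V \<Longrightarrow> adj E3 z u = adj E z u"
  using EV u1 u2 u3 u4 unfolding adj_def by (auto simp: doubleton_eq_iff)

lemma nb3_old: "z \<in> V \<Longrightarrow> z \<noteq> v \<Longrightarrow> nb V3 E3 z = nb V E z"
  using EV u1 u2 u3 u4 unfolding nb_def adj_def by (auto simp: doubleton_eq_iff)

lemma nb3_v: "nb V3 E3 v = insert u1 (nb V E v)"
  using EV u1 u2 u3 u4 v unfolding nb_def adj_def by (auto simp: doubleton_eq_iff)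

lemma nb3_u1: "nb V3 E3 u1 = {u2, v}"
  using EV u1 u2 u3 u4 v dist unfolding nb_def adj_def by (auto simp: doubleton_eq_iff)
lemma nb3_u2: "nb V3 E3 u2 = {u1, u3}"
  using EV u1 u2 u3 u4 v dist unfolding nb_def adj_def by (auto simp: doubleton_eq_iff)
lemma nb3_u3: "nb V3 E3 u3 = {u2, u4}"
  using EV u1 u2 u3 u4 v dist unfolding nb_def adj_def by (auto simp: doubleton_eq_iff)
lemma nb3_u4: "nb V3 E3 u4 = {u3}"
  using EV u1 u2 u3 u4 v dist unfolding nb_def adj_def by (auto simp: doubleton_eq_iff)
end



definition goodL where
  "goodL V E S x c \<longleftrightarrow> c \<in> nb V E x \<and> S c = SC \<and> nb V E c = {x} \<and> card (nb V E x - {c}) \<le> 1"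

definition goodX where
  "goodX V E S x c d b \<longleftrightarrow> c \<in> nb V E x \<and> S c = SC \<and> nb V E c = {x,d} \<and> nb V E d = {c,b} \<and>
     S d = SD \<and> S b = SB \<and> (card (nb V E x - {c}) \<le> 1 \<or> card (nb V E b - {d}) \<le> 1)"

definition invA where
  "invA V E S \<longleftrightarrow> (\<forall>x\<in>V. S x = SA \<longrightarrow>
     (\<forall>z1\<in>nb V E x. \<forall>z2\<in>nb V E x. S z1 = SC \<longrightarrow> S z2 = SC \<longrightarrow> z1 = z2) \<and>
     ((\<exists>c. goodL V E S x c) \<or> (\<exists>c d b. goodX V E S x c d b)))"

definition invB where
  "invB V E S \<longleftrightarrow> (\<forall>b\<in>V. S b = SB \<longrightarrow> (\<exists>a\<in>nb V E b. S a = SA) \<and>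
     (\<forall>d1\<in>nb V E b. \<forall>d2\<in>nb V E b. S d1 = SD \<longrightarrow> S d2 = SD \<longrightarrow> d1 = d2))"

definition invC where
  "invC V E S \<longleftrightarrow> (\<forall>c\<in>V. S c = SC \<longrightarrow> (\<exists>x\<in>nb V E c. S x = SA))"

definition invD where
  "invD V E S \<longleftrightarrow> (\<forall>d\<in>V. S d = SD \<longrightarrow> (\<exists>c b x a. nb V E d = {c,b} \<and> S c = SC \<and> S b = SB \<and>
      x \<in> nb V E c \<and> a \<in> nb V E b \<and> S x = SA \<and> S a = SA \<and> x \<noteq> a))"

definition invDeg where
  "invDeg V E S \<longleftrightarrow> (\<forall>z\<in>V. S z \<noteq> SC \<longrightarrow> 2 \<le> card (nb V E z))"

definition invCnt where
  "invCnt V E S \<longleftrightarrow> 4 * card {x\<in>V. S x = SA} = card V + card (supports V E) + card (leaves V E)"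

definition inv where
  "inv V E S \<longleftrightarrow> finite V \<and> (\<forall>e\<in>E. e \<subseteq> V) \<and> invA V E S \<and> invB V E S \<and> invC V E S \<and>
     invD V E S \<and> invDeg V E S \<and> invCnt V E S"

lemma nb_fin: "finite V \<Longrightarrow> finite (nb V E v)"
  using nb_sub finite_subset by metis

lemma adj_nb: "adj E v u \<Longrightarrow> u \<in> V \<Longrightarrow> u \<in> nb V E v" unfolding nb_def by simp

lemma nb_adj: "u \<in> nb V E v \<Longrightarrow> adj E v u \<and> u \<in> V" unfolding nb_def by simp

lemma adj_in: "\<forall>e\<in>E. e \<subseteq> V \<Longrightarrow> adj E u v \<Longrightarrow> u \<in> V \<and> v \<in> V"
  unfolding adj_def by auto

lemma Aset_2DD:
  assumes "invB V E S" "invC V E S" "invD V E S"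
  shows "is_2DD V E {x\<in>V. S x = SA}"
  unfolding is_2DD_def
proof (intro conjI ballI)
  show "{x \<in> V. S x = SA} \<subseteq> V" by auto
next
  fix v assume v: "v \<in> V - {x \<in> V. S x = SA}"
  hence vV: "v \<in> V" and vA: "S v \<noteq> SA" by auto
  show "(\<exists>u\<in>{x \<in> V. S x = SA}. adj E v u) \<or>
     (\<exists>u\<in>{x \<in> V. S x = SA}. \<exists>w\<in>{x \<in> V. S x = SA}. u \<noteq> w \<and> dist2 V E v u \<and> dist2 V E v w)"
  proof (cases "S v")
    case SA then show ?thesis using vA by simp
  next
    case SB
    then obtain a where "a \<in> nb V E v" "S a = SA" using assms(1) vV unfolding invB_def by blast
    then show ?thesis unfolding nb_def by auto
  next
    case SC
    then obtain a where "a \<in> nb V E v" "S a = SA" using assms(2) vV unfolding invC_def by blast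
    then show ?thesis unfolding nb_def by auto
  next
    case SD
    then obtain c b x a where h: "nb V E v = {c,b}" "S c = SC" "S b = SB"
      "x \<in> nb V E c" "a \<in> nb V E b" "S x = SA" "S a = SA" "x \<noteq> a"
      using assms(3) vV unfolding invD_def by blast
    have cn: "c \<in> nb V E v" "b \<in> nb V E v" using h(1) by auto
    have xV: "x \<in> V" using nb_adj[OF h(4)] by simp
    have aV: "a \<in> V" using nb_adj[OF h(5)] by simp
    have d1: "dist2 V E v x"
      unfolding dist2_def
    proof (intro conjI)
      show "v \<noteq> x" using SD h(6) by auto
      show "\<not> adj E v x"
      proof
        assume "adj E v x"
        hence "x \<in> nb V E v" using adj_nb[OF _ xV] by blast
        thus False using h(1,2,3,6) by auto
      qed
      show "\<exists>w\<in>V. adj E v w \<and> adj E w x" using nb_adj[OF cn(1)] nb_adj[OF h(4)] by blast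
    qed
    have d2: "dist2 V E v a"
      unfolding dist2_def
    proof (intro conjI)
      show "v \<noteq> a" using SD h(7) by auto
      show "\<not> adj E v a"
      proof
        assume "adj E v a"
        hence "a \<in> nb V E v" using adj_nb[OF _ aV] by blast
        thus False using h(1,2,3,7) by auto
      qed
      show "\<exists>w\<in>V. adj E v w \<and> adj E w a" using nb_adj[OF cn(2)] nb_adj[OF h(5)] by blast
    qed
    show ?thesis using d1 d2 h(6,7,8) xV aV by blast
  qed
qed

definition Rel where
  "Rel V E S D x y \<longleftrightarrow> y \<in> D \<and> ((\<exists>c. goodL V E S x c \<and> y \<in> {x,c}) \<or>
      (\<exists>c d b. goodX V E S x c d b \<and> y \<in> {x,c,d,b}))"

lemma two_card:
  assumes "finite A" "u \<in> A" "w \<in> A" "u \<noteq> w" shows "2 \<le> card A"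
proof -
  have "{u,w} \<subseteq> A" using assms by auto
  hence "card {u,w} \<le> card A" using assms(1) by (rule card_mono[rotated])
  thus ?thesis using assms(4) by simp
qed

lemma dist2_via:
  assumes "dist2 V E c u" "nb V E c \<subseteq> M" "\<forall>e\<in>E. e \<subseteq> V"
  shows "\<exists>m\<in>M. u \<in> nb V E m - {c}"
proof -
  obtain m where m: "m \<in> V" "adj E c m" "adj E m u" "c \<noteq> u" using assms(1) unfolding dist2_def by blast
  have "m \<in> nb V E c" using adj_nb[OF m(2) m(1)] .
  hence mM: "m \<in> M" using assms(2) by blast
  have "u \<in> V" using adj_in[OF assms(3) m(3)] by simp
  hence "u \<in> nb V E m" using adj_nb[OF m(3)] by simp
  thus ?thesis using mM m(4) by blast
qed

lemma force_pt:
  assumes "is_2DD V E D" "c \<in> V" "c \<notin> D" "nb V E c \<inter> D = {}"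
  shows "\<exists>u w. u \<in> D \<and> w \<in> D \<and> u \<noteq> w \<and> dist2 V E c u \<and> dist2 V E c w"
proof -
  have DV: "D \<subseteq> V" using assms(1) unfolding is_2DD_def by auto
  have n1: "\<not> (\<exists>u\<in>D. adj E c u)"
  proof
    assume "\<exists>u\<in>D. adj E c u"
    then obtain u where "u \<in> D" "adj E c u" by blast
    moreover have "u \<in> V" using \<open>u \<in> D\<close> DV by blast
    ultimately have "u \<in> nb V E c \<inter> D" using adj_nb by simp
    thus False using assms(4) by simp
  qed
  have cVD: "c \<in> V - D" using assms by simp
  have all: "\<forall>v\<in>V - D. (\<exists>u\<in>D. adj E v u) \<or> (\<exists>u\<in>D. \<exists>w\<in>D. u \<noteq> w \<and> dist2 V E v u \<and> dist2 V E v w)"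
    using assms(1) unfolding is_2DD_def by (rule conjunct2)
  have "(\<exists>u\<in>D. adj E c u) \<or> (\<exists>u\<in>D. \<exists>w\<in>D. u \<noteq> w \<and> dist2 V E c u \<and> dist2 V E c w)"
    using bspec[OF all cVD] .
  with n1 show ?thesis by blast
qed

lemma Rel_exists:
  assumes fin: "finite V" and EV: "\<forall>e\<in>E. e \<subseteq> V" and iA: "invA V E S" and D: "is_2DD V E D"
    and x: "x \<in> V" "S x = SA"
  shows "\<exists>y. Rel V E S D x y"
proof -
  have DV: "D \<subseteq> V" using D unfolding is_2DD_def by auto
  from iA x have "(\<exists>c. goodL V E S x c) \<or> (\<exists>c d b. goodX V E S x c d b)" unfolding invA_def by blast
  thus ?thesis
  proof
    assume "\<exists>c. goodL V E S x c"
    then obtain c where g: "goodL V E S x c" by blast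
    hence g': "c \<in> nb V E x" "nb V E c = {x}" "card (nb V E x - {c}) \<le> 1" unfolding goodL_def by auto
    have cV: "c \<in> V" using nb_adj[OF g'(1)] by simp
    show ?thesis
    proof (rule ccontr)
      assume "\<not> ?thesis"
      hence nR: "\<not> Rel V E S D x y" for y by blast
      have "y \<notin> D" if "y \<in> {x,c}" for y
      proof
        assume "y \<in> D" hence "Rel V E S D x y" unfolding Rel_def using g that by blast
        thus False using nR by blast
      qed
      hence nD: "x \<notin> D" "c \<notin> D" by auto
      obtain u w where uw: "u \<in> D" "w \<in> D" "u \<noteq> w" "dist2 V E c u" "dist2 V E c w"
        using force_pt[OF D cV nD(2)] g'(2) nD(1) by auto
      have "u \<in> nb V E x - {c}" using dist2_via[OF uw(4) _ EV, of "{x}"] g'(2) by simp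
      moreover have "w \<in> nb V E x - {c}" using dist2_via[OF uw(5) _ EV, of "{x}"] g'(2) by simp
      ultimately have "2 \<le> card (nb V E x - {c})" using two_card[OF finite_Diff[OF nb_fin[OF fin]] _ _ uw(3)] by blast
      thus False using g'(3) by simp
    qed
  next
    assume "\<exists>c d b. goodX V E S x c d b"
    then obtain c d b where g: "goodX V E S x c d b" by blast
    hence g': "c \<in> nb V E x" "nb V E c = {x,d}" "nb V E d = {c,b}"
       "card (nb V E x - {c}) \<le> 1 \<or> card (nb V E b - {d}) \<le> 1" unfolding goodX_def by auto
    have cV: "c \<in> V" using nb_adj[OF g'(1)] by simp
    have dV: "d \<in> V" using nb_adj[of d V E c] g'(2) by simp
    show ?thesis
    proof (rule ccontr)
      assume "\<not> ?thesis"
      hence nR: "\<not> Rel V E S D x y" for y by blast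
      have "y \<notin> D" if "y \<in> {x,c,d,b}" for y
      proof
        assume "y \<in> D" hence "Rel V E S D x y" unfolding Rel_def using g that by blast
        thus False using nR by blast
      qed
      hence nD: "x \<notin> D" "c \<notin> D" "d \<notin> D" "b \<notin> D" by auto
      obtain u w where uw: "u \<in> D" "w \<in> D" "u \<noteq> w" "dist2 V E c u" "dist2 V E c w"
        using force_pt[OF D cV nD(2)] g'(2) nD(1,3) by auto
      have "u \<in> nb V E x - {c}"
      proof -
        obtain m where m: "m \<in> {x,d}" "u \<in> nb V E m - {c}" using dist2_via[OF uw(4) _ EV, of "{x,d}"] g'(2,3) by blast
        have "m \<noteq> d"
        proof
          assume "m = d" hence "u = b" using m(2) g'(2,3) by blast
          thus False using nD uw(1) by blast
        qed
        thus ?thesis using m by blast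
      qed
      moreover have "w \<in> nb V E x - {c}"
      proof -
        obtain m where m: "m \<in> {x,d}" "w \<in> nb V E m - {c}" using dist2_via[OF uw(5) _ EV, of "{x,d}"] g'(2,3) by blast
        have "m \<noteq> d"
        proof
          assume "m = d" hence "w = b" using m(2) g'(2,3) by blast
          thus False using nD uw(2) by blast
        qed
        thus ?thesis using m by blast
      qed
      ultimately have c1: "2 \<le> card (nb V E x - {c})" using two_card[OF finite_Diff[OF nb_fin[OF fin]] _ _ uw(3)] by blast
      obtain u w where uw: "u \<in> D" "w \<in> D" "u \<noteq> w" "dist2 V E d u" "dist2 V E d w"
        using force_pt[OF D dV nD(3)] g'(3) nD(2,4) by auto
      have "u \<in> nb V E b - {d}"
      proof -
        obtain m where m: "m \<in> {c,b}" "u \<in> nb V E m - {d}" using dist2_via[OF uw(4) _ EV, of "{c,b}"] g'(2,3) by blast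
        have "m \<noteq> c"
        proof
          assume "m = c" hence "u = x" using m(2) g'(2,3) by blast
          thus False using nD uw(1) by blast
        qed
        thus ?thesis using m by blast
      qed
      moreover have "w \<in> nb V E b - {d}"
      proof -
        obtain m where m: "m \<in> {c,b}" "w \<in> nb V E m - {d}" using dist2_via[OF uw(5) _ EV, of "{c,b}"] g'(2,3) by blast
        have "m \<noteq> c"
        proof
          assume "m = c" hence "w = x" using m(2) g'(2,3) by blast
          thus False using nD uw(2) by blast
        qed
        thus ?thesis using m by blast
      qed
      ultimately have c2: "2 \<le> card (nb V E b - {d})" using two_card[OF finite_Diff[OF nb_fin[OF fin]] _ _ uw(3)] by blast
      show False using c1 c2 g'(4) by simp
    qed
  qed
qed



lemma Rel_info:
  assumes "Rel V E S D x y" "S x = SA"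
  shows "\<exists>c. c \<in> nb V E x \<and> S c = SC \<and> (\<forall>z\<in>nb V E c. S z \<noteq> SD \<longrightarrow> z = x) \<and>
     (y = x \<or> y = c \<or> (\<exists>d b. nb V E c = {x,d} \<and> nb V E d = {c,b} \<and> S d = SD \<and> S b = SB \<and> (y = d \<or> y = b)))"
proof -
  have "(\<exists>c. goodL V E S x c \<and> y \<in> {x,c}) \<or> (\<exists>c d b. goodX V E S x c d b \<and> y \<in> {x,c,d,b})"
    using assms(1) unfolding Rel_def by (rule conjunct2)
  thus ?thesis
  proof
    assume "\<exists>c. goodL V E S x c \<and> y \<in> {x,c}"
    then obtain c where c: "goodL V E S x c" "y \<in> {x,c}" by blast
    hence "c \<in> nb V E x" "S c = SC" "nb V E c = {x}" unfolding goodL_def by auto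
    thus ?thesis using c(2) by auto
  next
    assume "\<exists>c d b. goodX V E S x c d b \<and> y \<in> {x,c,d,b}"
    then obtain c d b where c: "goodX V E S x c d b" "y \<in> {x,c,d,b}" by blast
    hence h: "c \<in> nb V E x" "S c = SC" "nb V E c = {x,d}" "nb V E d = {c,b}" "S d = SD" "S b = SB"
      unfolding goodX_def by auto
    have "\<forall>z\<in>nb V E c. S z \<noteq> SD \<longrightarrow> z = x" using h(3,5) by auto
    moreover have "y = x \<or> y = c \<or> (\<exists>d b. nb V E c = {x,d} \<and> nb V E d = {c,b} \<and> S d = SD \<and> S b = SB \<and> (y = d \<or> y = b))"
      using c(2) h by auto
    ultimately show ?thesis using h(1,2) by blast
  qed
qed

lemma Rel_unique:
  assumes iB: "invB V E S" and x: "x1 \<in> V" "x2 \<in> V" "S x1 = SA" "S x2 = SA"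
    and R: "Rel V E S D x1 y" "Rel V E S D x2 y"
  shows "x1 = x2"
proof -
  obtain c1 where c1: "c1 \<in> nb V E x1" "S c1 = SC" "\<forall>z\<in>nb V E c1. S z \<noteq> SD \<longrightarrow> z = x1"
     "y = x1 \<or> y = c1 \<or> (\<exists>d b. nb V E c1 = {x1,d} \<and> nb V E d = {c1,b} \<and> S d = SD \<and> S b = SB \<and> (y = d \<or> y = b))"
    using Rel_info[OF R(1) x(3)] by blast
  obtain c2 where c2: "c2 \<in> nb V E x2" "S c2 = SC" "\<forall>z\<in>nb V E c2. S z \<noteq> SD \<longrightarrow> z = x2"
     "y = x2 \<or> y = c2 \<or> (\<exists>d b. nb V E c2 = {x2,d} \<and> nb V E d = {c2,b} \<and> S d = SD \<and> S b = SB \<and> (y = d \<or> y = b))"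
    using Rel_info[OF R(2) x(4)] by blast
  have key: "x1 = x2" if "c1 = c2"
  proof -
    have "x2 \<in> nb V E c1" using nb_sym[OF c2(1) x(2)] that by simp
    thus ?thesis using c1(3) x(4) by auto
  qed
  have keyd: "x1 = x2" if "nb V E d1 = {c1,b1}" "nb V E d2 = {c2,b2}" "S b1 = SB" "d1 = d2" for d1 b1 d2 b2
  proof -
    have "c2 \<in> {c1,b1}" using that by auto
    hence "c2 = c1" using c2(2) that(3) by auto
    thus ?thesis using key by simp
  qed
  show ?thesis
  proof (cases "S y")
    case SA
    hence "y = x1" using c1(2,4) by auto
    moreover have "y = x2" using c2(2,4) SA by auto
    ultimately show ?thesis by simp
  next
    case SC
    hence "y = c1" using c1(4) x(3) by auto
    moreover have "y = c2" using c2(4) x(4) SC by auto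
    ultimately show ?thesis using key by simp
  next
    case SD
    then obtain d1 b1 where h1: "nb V E c1 = {x1,d1}" "nb V E d1 = {c1,b1}" "S b1 = SB" "y = d1"
      using c1(2,4) x(3) by auto
    obtain d2 b2 where h2: "nb V E c2 = {x2,d2}" "nb V E d2 = {c2,b2}" "S b2 = SB" "y = d2"
      using c2(2,4) x(4) SD by auto
    show ?thesis using keyd[OF h1(2) h2(2) h1(3)] h1(4) h2(4) by simp
  next
    case SB
    then obtain d1 b1 where h1: "nb V E c1 = {x1,d1}" "nb V E d1 = {c1,b1}" "S d1 = SD" "S b1 = SB" "y = b1"
      using c1(2,4) x(3) by auto
    obtain d2 b2 where h2: "nb V E c2 = {x2,d2}" "nb V E d2 = {c2,b2}" "S d2 = SD" "y = b2"
      using c2(2,4) x(4) SB by auto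
    have d1V: "d1 \<in> V" using nb_adj[of d1 V E c1] h1(1) by simp
    have d2V: "d2 \<in> V" using nb_adj[of d2 V E c2] h2(1) by simp
    have "b1 \<in> nb V E d1" using h1(2) by simp
    hence bV: "b1 \<in> V" and n1: "d1 \<in> nb V E b1" using nb_adj nb_sym d1V by fastforce+
    have "b1 \<in> nb V E d2" using h2(2) h1(5) h2(4) by simp
    hence n2: "d2 \<in> nb V E b1" using nb_sym d2V by fastforce
    have "d1 = d2" using iB bV h1(4) n1 n2 h1(3) h2(3) unfolding invB_def by blast
    thus ?thesis using keyd[OF h1(2) h2(2) h1(4)] by simp
  qed
qed

lemma lower_bound:
  assumes I: "inv V E S" and D: "is_2DD V E D"
  shows "card {x\<in>V. S x = SA} \<le> card D"
proof -
  have fin: "finite V" and EV: "\<forall>e\<in>E. e \<subseteq> V" and iA: "invA V E S" and iB: "invB V E S"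
    using I unfolding inv_def by auto
  have DV: "D \<subseteq> V" using D unfolding is_2DD_def by (rule conjunct1)
  define g where "g x = (SOME y. Rel V E S D x y)" for x
  have Rg: "Rel V E S D x (g x)" if "x \<in> {x\<in>V. S x = SA}" for x
  proof -
    have "\<exists>y. Rel V E S D x y" using Rel_exists[OF fin EV iA D] that by blast
    thus ?thesis unfolding g_def by (rule someI_ex)
  qed
  have inj: "inj_on g {x\<in>V. S x = SA}"
  proof (rule inj_onI)
    fix x1 x2 assume a: "x1 \<in> {x\<in>V. S x = SA}" "x2 \<in> {x\<in>V. S x = SA}" "g x1 = g x2"
    have "Rel V E S D x1 (g x1)" "Rel V E S D x2 (g x1)" using Rg[OF a(1)] Rg[OF a(2)] a(3) by simp_all
    thus "x1 = x2" using Rel_unique[OF iB] a(1,2) by blast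
  qed
  have "g ` {x\<in>V. S x = SA} \<subseteq> D" using Rg unfolding Rel_def by blast
  moreover have "finite D" using DV fin finite_subset by blast
  ultimately show ?thesis using card_inj_on_le inj by blast
qed

lemma gamma_eq:
  assumes I: "inv V E S"
  shows "gamma2d V E = card {x\<in>V. S x = SA}"
proof -
  have "invB V E S" "invC V E S" "invD V E S" using I unfolding inv_def by auto
  hence "is_2DD V E {x\<in>V. S x = SA}" by (rule Aset_2DD)
  show ?thesis unfolding gamma2d_def
  proof (rule Least_equality)
    show "\<exists>D. is_2DD V E D \<and> card D = card {x\<in>V. S x = SA}" using \<open>is_2DD V E _\<close> by blast
  next
    fix k assume "\<exists>D. is_2DD V E D \<and> card D = k"
    then obtain D where "is_2DD V E D" "card D = k" by blast
    thus "card {x\<in>V. S x = SA} \<le> k" using lower_bound[OF I] by blast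
  qed
qed

lemma final:
  assumes "inv V E S"
  shows "real (gamma2d V E) =
         (real (card V) + real (card (supports V E)) + real (card (leaves V E))) / 4"
proof -
  have "invCnt V E S" using assms unfolding inv_def by auto
  hence "4 * card {x\<in>V. S x = SA} = card V + card (supports V E) + card (leaves V E)" unfolding invCnt_def .
  hence "4 * real (card {x\<in>V. S x = SA}) = real (card V) + real (card (supports V E)) + real (card (leaves V E))"
    by (metis of_nat_add of_nat_mult of_nat_numeral)
  thus ?thesis using gamma_eq[OF assms] by simp
qed



lemma leaves_nb: "leaves V E = {v\<in>V. card (nb V E v) = 1}"
  unfolding leaves_def deg_nb ..

lemma base_inv:
  assumes dist: "distinct [a, b, c, d]" and S: "S a = SC" "S b = SA" "S c = SA" "S d = SC"
  shows "inv {a, b, c, d} {{a, b}, {b, c}, {c, d}} S"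
proof -
  let ?V = "{a, b, c, d}" and ?E = "{{a, b}, {b, c}, {c, d}}"
  have na: "nb ?V ?E a = {b}" using dist unfolding nb_def adj_def by (auto simp: doubleton_eq_iff)
  have nbb: "nb ?V ?E b = {a,c}" using dist unfolding nb_def adj_def by (auto simp: doubleton_eq_iff)
  have nc: "nb ?V ?E c = {b,d}" using dist unfolding nb_def adj_def by (auto simp: doubleton_eq_iff)
  have nd: "nb ?V ?E d = {c}" using dist unfolding nb_def adj_def by (auto simp: doubleton_eq_iff)
  have gb: "goodL ?V ?E S b a" unfolding goodL_def using na nbb dist S by auto
  have gc: "goodL ?V ?E S c d" unfolding goodL_def using nc nd dist S by auto
  have iA: "invA ?V ?E S" unfolding invA_def
  proof (intro ballI impI)
    fix x assume x: "x \<in> ?V" "S x = SA"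
    hence "x = b \<or> x = c" using S by auto
    thus "(\<forall>z1\<in>nb ?V ?E x. \<forall>z2\<in>nb ?V ?E x. S z1 = SC \<longrightarrow> S z2 = SC \<longrightarrow> z1 = z2) \<and>
         ((\<exists>c. goodL ?V ?E S x c) \<or> (\<exists>c d b. goodX ?V ?E S x c d b))"
      using gb gc nbb nc S by auto
  qed
  have iB: "invB ?V ?E S" unfolding invB_def using S by auto
  have iC: "invC ?V ?E S" unfolding invC_def using S na nd by auto
  have iD: "invD ?V ?E S" unfolding invD_def using S by auto
  have iDeg: "invDeg ?V ?E S" unfolding invDeg_def using S nbb nc dist by auto
  have Aset: "{x\<in>?V. S x = SA} = {b,c}" using S by auto
  have L: "leaves ?V ?E = {a,d}" unfolding leaves_nb using na nbb nc nd dist by auto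
  have Sp: "supports ?V ?E = {b,c}" unfolding supports_def L
    using dist unfolding adj_def by (auto simp: doubleton_eq_iff)
  have iCnt: "invCnt ?V ?E S" unfolding invCnt_def Aset L Sp using dist by simp
  have "\<forall>e\<in>?E. e \<subseteq> ?V" by auto
  thus ?thesis unfolding inv_def using iA iB iC iD iDeg iCnt by simp
qed



lemma supports_nb: "supports V E = {z\<in>V. nb V E z \<inter> leaves V E \<noteq> {}}"
proof -
  have "leaves V E \<subseteq> V" unfolding leaves_def by auto
  thus ?thesis unfolding supports_def nb_def by blast
qed

lemma card_diff1:
  assumes "finite A" "card A = 2" "c \<in> A" shows "card (A - {c}) \<le> 1"
  using assms by simp

lemma corrB_key:
  assumes EV: "\<forall>e\<in>E. e \<subseteq> V" and fin: "finite V" and iB: "invB V E S"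
    and g: "goodX V E S z c d b" and cb: "corr_of_B V E S b w" and dw: "deg V E w = 2"
  shows "card (nb V E z - {c}) \<le> 1"
proof -
  have g': "c \<in> nb V E z" "S c = SC" "nb V E c = {z,d}" "nb V E d = {c,b}" "S d = SD" "S b = SB"
    using g unfolding goodX_def by auto
  obtain v1 v2 where p: "induced_P4 E w v1 v2 b" "S v1 = SC" "S v2 = SD"
    using cb unfolding corr_of_B_def by blast
  have p': "distinct [w,v1,v2,b]" "adj E w v1" "adj E v1 v2" "adj E v2 b"
    using p(1) unfolding induced_P4_def by auto
  have dV: "d \<in> V" using nb_adj[of d V E c] g'(3) by simp
  have bV: "b \<in> V" using nb_adj[of b V E d] g'(4) by simp
  have v2V: "v2 \<in> V" using adj_in[OF EV p'(4)] by simp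
  have v1V: "v1 \<in> V" using adj_in[OF EV p'(3)] by simp
  have wV: "w \<in> V" using adj_in[OF EV p'(2)] by simp
  have "v2 \<in> nb V E b" using adj_nb[OF _ v2V] p'(4) adj_sym by metis
  moreover have "d \<in> nb V E b" using nb_sym[of b V E d] g'(4) dV by simp
  ultimately have dv2: "d = v2" using iB bV g'(6) g'(5) p(3) unfolding invB_def by blast
  have "v1 \<in> nb V E v2" using adj_nb[OF _ v1V] p'(3) adj_sym by metis
  hence "v1 \<in> {c,b}" using g'(4) dv2 by simp
  hence v1c: "v1 = c" using p'(1) by auto
  have "w \<in> nb V E v1" using adj_nb[OF _ wV] p'(2) adj_sym by metis
  hence "w \<in> {z,d}" using g'(3) v1c by simp
  hence wz: "w = z" using p'(1) dv2 by auto
  have "card (nb V E z) = 2" using dw wz unfolding deg_nb by simp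
  thus ?thesis using card_diff1[OF nb_fin[OF fin] _ g'(1)] by simp
qed

lemma corrA_facts:
  assumes EV: "\<forall>e\<in>E. e \<subseteq> V"
    and uq: "\<forall>z1\<in>nb V E z. \<forall>z2\<in>nb V E z. S z1 = SC \<longrightarrow> S z2 = SC \<longrightarrow> z1 = z2"
    and c: "c \<in> nb V E z" "S c = SC"
    and ca: "corr_of_A V E S P z w"
  shows "\<exists>v2. v2 \<in> nb V E c \<and> v2 \<noteq> z \<and> S v2 = SD \<and> w \<in> nb V E v2 \<and> w \<noteq> c \<and> S w = SB"
proof -
  obtain v1 v2 where p: "induced_P4 E z v1 v2 w" "S v1 = SC" "S v2 = SD" "S w = SB"
    using ca unfolding corr_of_A_def by blast
  have p': "distinct [z,v1,v2,w]" "adj E z v1" "adj E v1 v2" "adj E v2 w"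
    using p(1) unfolding induced_P4_def by auto
  have v2V: "v2 \<in> V" using adj_in[OF EV p'(4)] by simp
  have v1V: "v1 \<in> V" using adj_in[OF EV p'(3)] by simp
  have wV: "w \<in> V" using adj_in[OF EV p'(4)] by simp
  have "v1 \<in> nb V E z" using adj_nb[OF p'(2) v1V] .
  hence v1c: "v1 = c" using uq c p(2) by blast
  have "v2 \<in> nb V E c" using adj_nb[OF p'(3) v2V] v1c by simp
  moreover have "w \<in> nb V E v2" using adj_nb[OF p'(4) wV] .
  ultimately show ?thesis using p'(1) p(3,4) v1c by auto
qed

lemma corrA_key:
  assumes EV: "\<forall>e\<in>E. e \<subseteq> V" and fin: "finite V"
    and uq: "\<forall>z1\<in>nb V E z. \<forall>z2\<in>nb V E z. S z1 = SC \<longrightarrow> S z2 = SC \<longrightarrow> z1 = z2"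
    and g: "goodX V E S z c d b" and ca: "corr_of_A V E S P z w" and dw: "deg V E w = 2"
  shows "card (nb V E b - {d}) \<le> 1"
proof -
  have g': "c \<in> nb V E z" "S c = SC" "nb V E c = {z,d}" "nb V E d = {c,b}" "S d = SD" "S b = SB"
    using g unfolding goodX_def by auto
  obtain v2 where v2: "v2 \<in> nb V E c" "v2 \<noteq> z" "w \<in> nb V E v2" "w \<noteq> c"
    using corrA_facts[OF EV uq g'(1,2) ca] by blast
  have "v2 = d" using v2(1,2) g'(3) by simp
  hence "w = b" using v2(3,4) g'(4) by simp
  have dV: "d \<in> V" using nb_adj[of d V E c] g'(3) by simp
  have "d \<in> nb V E b" using nb_sym[of b V E d] g'(4) dV by simp
  moreover have "card (nb V E b) = 2" using dw \<open>w = b\<close> unfolding deg_nb by simp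
  ultimately show ?thesis using card_diff1[OF nb_fin[OF fin]] by simp
qed

lemma corrA_notL:
  assumes EV: "\<forall>e\<in>E. e \<subseteq> V"
    and uq: "\<forall>z1\<in>nb V E z. \<forall>z2\<in>nb V E z. S z1 = SC \<longrightarrow> S z2 = SC \<longrightarrow> z1 = z2"
    and g: "goodL V E S z c" and ca: "corr_of_A V E S P z w"
  shows False
proof -
  have g': "c \<in> nb V E z" "S c = SC" "nb V E c = {z}" using g unfolding goodL_def by auto
  obtain v2 where v2: "v2 \<in> nb V E c" "v2 \<noteq> z"
    using corrA_facts[OF EV uq g'(1,2) ca] by blast
  thus False using g'(3) by simp
qed



lemma pendant_inv:
  assumes I: "inv V E S" and v: "v \<in> V" and u1: "u1 \<notin> V" and u2: "u2 \<notin> V" and u12: "u1 \<noteq> u2"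
    and cond: "(S v = SB \<and> (\<exists>w\<in>V. corr_of_B V E S v w \<and> deg V E w = 2)) \<or>
               (S v = SA \<and> (\<exists>w\<in>V. corr_of_A V E S P v w \<and> deg V E w = 2))"
  shows "inv (V \<union> {u1,u2}) (E \<union> {{u1,u2},{u1,v}}) (S(u1 := SA, u2 := SC))"
proof -
  define V' where "V' = V \<union> {u1,u2}"
  define E' where "E' = E \<union> {{u1,u2},{u1,v}}"
  define S' where "S' = S(u1 := SA, u2 := SC)"
  have fin: "finite V" and EV: "\<forall>e\<in>E. e \<subseteq> V" and iA: "invA V E S" and iB: "invB V E S"
    and iC: "invC V E S" and iD: "invD V E S" and iDeg: "invDeg V E S" and iCnt: "invCnt V E S"
    using I unfolding inv_def by auto
  have fin': "finite V'" unfolding V'_def using fin by simp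
  have EV': "\<forall>e\<in>E'. e \<subseteq> V'" unfolding E'_def V'_def using EV v by auto
  have nold: "nb V' E' z = nb V E z" if "z \<in> V" "z \<noteq> v" for z
    unfolding V'_def E'_def using nbP_old[OF EV v u1 u2 u12 that] .
  have nv: "nb V' E' v = insert u1 (nb V E v)"
    unfolding V'_def E'_def using nbP_v[OF EV v u1 u2 u12] .
  have nu1: "nb V' E' u1 = {u2, v}"
    unfolding V'_def E'_def using nbP_u1[OF EV v u1 u2 u12] .
  have nu2: "nb V' E' u2 = {u1}"
    unfolding V'_def E'_def using nbP_u2[OF EV v u1 u2 u12] .
  have sub1: "nb V' E' z \<subseteq> insert u1 (nb V E z)" if "z \<in> V" for z
    using nold nv that by (cases "z = v") auto
  have sub2: "nb V E z \<subseteq> nb V' E' z" if "z \<in> V" for z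
    using nold nv that by (cases "z = v") auto
  have Sold: "S' z = S z" if "z \<in> V" for z unfolding S'_def using that u1 u2 by auto
  have Su1: "S' u1 = SA" and Su2: "S' u2 = SC" unfolding S'_def using u12 by auto
  have Sv: "S v \<noteq> SC" "S v \<noteq> SD" using cond by auto
  have uv: "u1 \<noteq> v" "u2 \<noteq> v" using u1 u2 v by auto
  have nbV: "nb V E z \<subseteq> V" for z by (rule nb_sub)
  have iA': "invA V' E' S'" unfolding invA_def
  proof (intro ballI impI)
    fix x assume xV': "x \<in> V'" and xA: "S' x = SA"
    show "(\<forall>z1\<in>nb V' E' x. \<forall>z2\<in>nb V' E' x. S' z1 = SC \<longrightarrow> S' z2 = SC \<longrightarrow> z1 = z2) \<and>
         ((\<exists>c. goodL V' E' S' x c) \<or> (\<exists>c d b. goodX V' E' S' x c d b))"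
    proof (cases "x \<in> V")
      case False
      hence "x = u1" using xV' xA Su2 unfolding V'_def by auto
      have uq: "\<forall>z1\<in>nb V' E' x. \<forall>z2\<in>nb V' E' x. S' z1 = SC \<longrightarrow> S' z2 = SC \<longrightarrow> z1 = z2"
        using \<open>x = u1\<close> nu1 Sold[OF v] Sv by auto
      have "goodL V' E' S' x u2" unfolding goodL_def using \<open>x = u1\<close> nu1 nu2 Su2 uv by auto
      thus ?thesis using uq by blast
    next
      case True
      have xA0: "S x = SA" using xA Sold[OF True] by simp
      have uq0: "\<forall>z1\<in>nb V E x. \<forall>z2\<in>nb V E x. S z1 = SC \<longrightarrow> S z2 = SC \<longrightarrow> z1 = z2"
        and LX: "(\<exists>c. goodL V E S x c) \<or> (\<exists>c d b. goodX V E S x c d b)"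
        using iA True xA0 unfolding invA_def by auto
      have uq: "\<forall>z1\<in>nb V' E' x. \<forall>z2\<in>nb V' E' x. S' z1 = SC \<longrightarrow> S' z2 = SC \<longrightarrow> z1 = z2"
      proof (intro ballI impI)
        fix z1 z2 assume z: "z1 \<in> nb V' E' x" "z2 \<in> nb V' E' x" "S' z1 = SC" "S' z2 = SC"
        have "z1 \<in> nb V E x" "z2 \<in> nb V E x" using z sub1[OF True] Su1 by auto
        moreover have "S z1 = SC" "S z2 = SC" using z(3,4) Sold nbV calculation by (metis subsetD)+
        ultimately show "z1 = z2" using uq0 by blast
      qed
      from LX show ?thesis
      proof
        assume "\<exists>c. goodL V E S x c"
        then obtain c where g: "goodL V E S x c" by blast
        have g': "c \<in> nb V E x" "S c = SC" "nb V E c = {x}" "card (nb V E x - {c}) \<le> 1"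
          using g unfolding goodL_def by auto
        have cV: "c \<in> V" using g'(1) nbV by blast
        have xv: "x \<noteq> v"
        proof
          assume "x = v"
          hence "\<exists>w\<in>V. corr_of_A V E S P x w" using cond xA0 by auto
          thus False using corrA_notL[OF EV uq0 g] by blast
        qed
        have cv: "c \<noteq> v" using g'(2) Sv by auto
        have "goodL V' E' S' x c" unfolding goodL_def
          using g' nold[OF True xv] nold[OF cV cv] Sold[OF cV] by simp
        thus ?thesis using uq by blast
      next
        assume "\<exists>c d b. goodX V E S x c d b"
        then obtain c d b where g: "goodX V E S x c d b" by blast
        have g': "c \<in> nb V E x" "S c = SC" "nb V E c = {x,d}" "nb V E d = {c,b}" "S d = SD" "S b = SB"
          "card (nb V E x - {c}) \<le> 1 \<or> card (nb V E b - {d}) \<le> 1"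
          using g unfolding goodX_def by auto
        have cV: "c \<in> V" using g'(1) nbV by blast
        have dV: "d \<in> V" using g'(3) nbV by blast
        have bV: "b \<in> V" using g'(4) nbV by blast
        have cv: "c \<noteq> v" using g'(2) Sv by auto
        have dv: "d \<noteq> v" using g'(5) Sv by auto
        have disj: "card (nb V' E' x - {c}) \<le> 1 \<or> card (nb V' E' b - {d}) \<le> 1"
        proof (cases "x = v")
          case True
          hence "\<exists>w\<in>V. corr_of_A V E S P x w \<and> deg V E w = 2" using cond xA0 by auto
          hence "card (nb V E b - {d}) \<le> 1" using corrA_key[OF EV fin uq0 g] by blast
          moreover have "b \<noteq> v" using True xA0 g'(6) by auto
          ultimately show ?thesis using nold[OF bV] by simp
        next
          case xv: False
          show ?thesis
          proof (cases "b = v")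
            case True
            hence "\<exists>w\<in>V. corr_of_B V E S b w \<and> deg V E w = 2" using cond g'(6) by auto
            hence "card (nb V E x - {c}) \<le> 1" using corrB_key[OF EV fin iB g] by blast
            thus ?thesis using nold[OF \<open>x \<in> V\<close> xv] by simp
          next
            case False
            thus ?thesis using g'(7) nold[OF \<open>x \<in> V\<close> xv] nold[OF bV] by simp
          qed
        qed
        have "goodX V' E' S' x c d b" unfolding goodX_def
          using g' nold[OF cV cv] nold[OF dV dv] Sold[OF cV] Sold[OF dV] Sold[OF bV] sub2[OF True] disj
          by auto
        thus ?thesis using uq by blast
      qed
    qed
  qed
  have iB': "invB V' E' S'" unfolding invB_def
  proof (intro ballI impI)
    fix b assume bV': "b \<in> V'" and bB: "S' b = SB"
    have bV: "b \<in> V" using bV' bB Su1 Su2 unfolding V'_def by auto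
    have bB0: "S b = SB" using bB Sold[OF bV] by simp
    obtain a where a: "a \<in> nb V E b" "S a = SA" using iB bV bB0 unfolding invB_def by blast
    have aV: "a \<in> V" using a(1) nbV by blast
    have ex: "\<exists>a\<in>nb V' E' b. S' a = SA" using a sub2[OF bV] Sold[OF aV] by auto
    have "\<forall>d1\<in>nb V' E' b. \<forall>d2\<in>nb V' E' b. S' d1 = SD \<longrightarrow> S' d2 = SD \<longrightarrow> d1 = d2"
    proof (intro ballI impI)
      fix d1 d2 assume z: "d1 \<in> nb V' E' b" "d2 \<in> nb V' E' b" "S' d1 = SD" "S' d2 = SD"
      have "d1 \<in> nb V E b" "d2 \<in> nb V E b" using z sub1[OF bV] Su1 by auto
      moreover have "S d1 = SD" "S d2 = SD" using z(3,4) Sold nbV calculation by (metis subsetD)+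
      ultimately show "d1 = d2" using iB bV bB0 unfolding invB_def by blast
    qed
    thus "(\<exists>a\<in>nb V' E' b. S' a = SA) \<and>
         (\<forall>d1\<in>nb V' E' b. \<forall>d2\<in>nb V' E' b. S' d1 = SD \<longrightarrow> S' d2 = SD \<longrightarrow> d1 = d2)" using ex by blast
  qed
  have iC': "invC V' E' S'" unfolding invC_def
  proof (intro ballI impI)
    fix c assume cV': "c \<in> V'" and cC: "S' c = SC"
    show "\<exists>x\<in>nb V' E' c. S' x = SA"
    proof (cases "c \<in> V")
      case True
      obtain a where a: "a \<in> nb V E c" "S a = SA" using iC True cC Sold[OF True] unfolding invC_def by auto
      have aV: "a \<in> V" using a(1) nbV by blast
      show ?thesis using a sub2[OF True] Sold[OF aV] by auto
    next
      case False
      hence "c = u2" using cV' cC Su1 unfolding V'_def by auto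
      thus ?thesis using nu2 Su1 by simp
    qed
  qed
  have iD': "invD V' E' S'" unfolding invD_def
  proof (intro ballI impI)
    fix d assume dV': "d \<in> V'" and dD: "S' d = SD"
    have dV: "d \<in> V" using dV' dD Su1 Su2 unfolding V'_def by auto
    have dD0: "S d = SD" using dD Sold[OF dV] by simp
    obtain c b x a where h: "nb V E d = {c,b}" "S c = SC" "S b = SB"
      "x \<in> nb V E c" "a \<in> nb V E b" "S x = SA" "S a = SA" "x \<noteq> a"
      using iD dV dD0 unfolding invD_def by blast
    have dv: "d \<noteq> v" using dD0 Sv by auto
    have cV: "c \<in> V" and bV: "b \<in> V" using h(1) nbV by auto
    have xV: "x \<in> V" using h(4) nbV by blast
    have aV: "a \<in> V" using h(5) nbV by blast
    have "nb V' E' d = {c,b}" "S' c = SC" "S' b = SB" "x \<in> nb V' E' c" "a \<in> nb V' E' b" "S' x = SA" "S' a = SA"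
      using h nold[OF dV dv] Sold cV bV xV aV sub2[OF cV] sub2[OF bV] by auto
    thus "\<exists>c b x a. nb V' E' d = {c,b} \<and> S' c = SC \<and> S' b = SB \<and>
      x \<in> nb V' E' c \<and> a \<in> nb V' E' b \<and> S' x = SA \<and> S' a = SA \<and> x \<noteq> a" using h(8) by blast
  qed
  have iDeg': "invDeg V' E' S'" unfolding invDeg_def
  proof (intro ballI impI)
    fix z assume zV': "z \<in> V'" and zC: "S' z \<noteq> SC"
    show "2 \<le> card (nb V' E' z)"
    proof (cases "z \<in> V")
      case True
      have "2 \<le> card (nb V E z)" using iDeg True zC Sold[OF True] unfolding invDeg_def by auto
      moreover have "card (nb V E z) \<le> card (nb V' E' z)"
        using sub2[OF True] nb_fin[OF fin'] by (rule card_mono[rotated])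
      ultimately show ?thesis by simp
    next
      case False
      hence "z = u1" using zV' zC Su2 unfolding V'_def by auto
      thus ?thesis using nu1 uv by simp
    qed
  qed
  have LV: "leaves V E \<subseteq> V" unfolding leaves_def by auto
  have vnotleaf: "card (nb V E v) \<ge> 2" using iDeg v Sv(1) unfolding invDeg_def by blast
  have memV': "z \<in> V' \<longleftrightarrow> z \<in> V \<or> z = u1 \<or> z = u2" for z unfolding V'_def by blast
  have u1nb: "u1 \<notin> nb V E z" for z using u1 nbV by blast
  have u2nb: "u2 \<notin> nb V E z" for z using u2 nbV by blast
  have L': "leaves V' E' = insert u2 (leaves V E)"
  proof (rule set_eqI)
    fix z
    show "z \<in> leaves V' E' \<longleftrightarrow> z \<in> insert u2 (leaves V E)"
    proof (cases "z \<in> V")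
      case zV: True
      show ?thesis
      proof (cases "z = v")
        case True
        have "card (nb V' E' v) = card (nb V E v) + 1"
          unfolding nv using card_insert_disjoint[OF nb_fin[OF fin] u1nb] by simp
        hence "v \<notin> leaves V' E'" unfolding leaves_nb using vnotleaf by simp
        moreover have "v \<notin> insert u2 (leaves V E)" unfolding leaves_nb using vnotleaf uv by simp
        ultimately show ?thesis using True by blast
      next
        case False
        have "z \<noteq> u2" using zV u2 by blast
        moreover have "z \<in> V'" using memV' zV by blast
        ultimately show ?thesis unfolding leaves_nb using nold[OF zV False] zV by simp
      qed
    next
      case False
      have "u1 \<notin> leaves V' E'" using nu1 uv by (simp add: leaves_nb)
      moreover have "u2 \<in> leaves V' E'" using nu2 memV' by (simp add: leaves_nb)
      moreover have "z \<notin> leaves V E" using False LV by blast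
      moreover have "z \<notin> V' \<Longrightarrow> z \<notin> leaves V' E'" unfolding leaves_nb by simp
      ultimately show ?thesis using False memV' u12 by blast
    qed
  qed
  have SpV: "supports V E \<subseteq> V" unfolding supports_def by auto
  have Sp': "supports V' E' = insert u1 (supports V E)"
  proof (rule set_eqI)
    fix z
    show "z \<in> supports V' E' \<longleftrightarrow> z \<in> insert u1 (supports V E)"
    proof (cases "z \<in> V")
      case zV: True
      have zV': "z \<in> V'" using memV' zV by blast
      have zu: "z \<noteq> u1" using zV u1 by blast
      have "nb V' E' z \<inter> leaves V' E' = nb V E z \<inter> leaves V E"
      proof (cases "z = v")
        case True
        show ?thesis unfolding True nv L' using u1 u12 LV u2nb by blast
      next
        case False
        show ?thesis unfolding nold[OF zV False] L' using u2nb by blast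
      qed
      thus ?thesis unfolding supports_nb using zV zV' zu by simp
    next
      case False
      have "u1 \<in> supports V' E'" using nu1 L' memV' by (simp add: supports_nb)
      moreover have "{u1} \<inter> insert u2 (leaves V E) = {}" using u12 LV u1 by blast
      hence "u2 \<notin> supports V' E'" using nu2 L' by (simp add: supports_nb)
      moreover have "z \<notin> supports V E" using False SpV by blast
      moreover have "z \<notin> V' \<Longrightarrow> z \<notin> supports V' E'" unfolding supports_nb by simp
      ultimately show ?thesis using False memV' u12 by blast
    qed
  qed
  have A': "{x\<in>V'. S' x = SA} = insert u1 {x\<in>V. S x = SA}"
  proof (rule set_eqI)
    fix x
    show "x \<in> {x\<in>V'. S' x = SA} \<longleftrightarrow> x \<in> insert u1 {x\<in>V. S x = SA}"
    proof (cases "x \<in> V")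
      case True thus ?thesis using Sold[OF True] memV' u1 by auto
    next
      case False thus ?thesis using memV' Su1 Su2 by auto
    qed
  qed
  have iCnt': "invCnt V' E' S'" unfolding invCnt_def A' L' Sp'
  proof -
    have "card (insert u1 {x\<in>V. S x = SA}) = card {x\<in>V. S x = SA} + 1" using fin u1 by simp
    moreover have "card V' = card V + 2"
    proof -
      have "V' = insert u1 (insert u2 V)" unfolding V'_def by blast
      moreover have "u1 \<notin> insert u2 V" using u1 u12 by blast
      moreover have "card (insert u2 V) = Suc (card V)" using card_insert_disjoint[OF fin u2] .
      moreover have "card (insert u1 (insert u2 V)) = Suc (card (insert u2 V))"
        using card_insert_disjoint[OF finite_insert[THEN iffD2, OF fin] \<open>u1 \<notin> insert u2 V\<close>] .
      ultimately show ?thesis by (metis add_2_eq_Suc')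
    qed
    moreover have "card (insert u1 (supports V E)) = card (supports V E) + 1"
    proof -
      have "u1 \<notin> supports V E" using u1 SpV by blast
      thus ?thesis using card_insert_disjoint[OF finite_subset[OF SpV fin]] by simp
    qed
    moreover have "card (insert u2 (leaves V E)) = card (leaves V E) + 1"
    proof -
      have "u2 \<notin> leaves V E" using u2 LV by blast
      thus ?thesis using card_insert_disjoint[OF finite_subset[OF LV fin]] by simp
    qed
    ultimately show "4 * card (insert u1 {x \<in> V. S x = SA}) =
        card V' + card (insert u1 (supports V E)) + card (insert u2 (leaves V E))"
      using iCnt unfolding invCnt_def by simp
  qed
  have "inv V' E' S'" unfolding inv_def using fin' EV' iA' iB' iC' iD' iDeg' iCnt' by (intro conjI)
  thus ?thesis unfolding V'_def E'_def S'_def .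
qed



lemma O3_inv:
  assumes I: "inv V E S" and v: "v \<in> V" and Sv: "S v = SC" and dv: "deg V E v = 1"
    and dist: "distinct [u1, u2, u3, u4]" and u1: "u1 \<notin> V" and u2: "u2 \<notin> V" and u3: "u3 \<notin> V" and u4: "u4 \<notin> V"
  shows "inv (V \<union> {u1, u2, u3, u4}) (E \<union> {{u1, u2}, {u2, u3}, {u3, u4}, {u1, v}})
            (S(u1 := SD, u2 := SB, u3 := SA, u4 := SC))"
proof -
  define V' where "V' = V \<union> {u1, u2, u3, u4}"
  define E' where "E' = E \<union> {{u1, u2}, {u2, u3}, {u3, u4}, {u1, v}}"
  define S' where "S' = S(u1 := SD, u2 := SB, u3 := SA, u4 := SC)"
  have fin: "finite V" and EV: "\<forall>e\<in>E. e \<subseteq> V" and iA: "invA V E S" and iB: "invB V E S"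
    and iC: "invC V E S" and iD: "invD V E S" and iDeg: "invDeg V E S" and iCnt: "invCnt V E S"
    using I unfolding inv_def by auto
  have fin': "finite V'" unfolding V'_def using fin by simp
  have EV': "\<forall>e\<in>E'. e \<subseteq> V'" unfolding E'_def V'_def using EV v by auto
  have nold: "nb V' E' z = nb V E z" if "z \<in> V" "z \<noteq> v" for z
    unfolding V'_def E'_def using nb3_old[OF EV v dist u1 u2 u3 u4 that] .
  have nv0: "nb V' E' v = insert u1 (nb V E v)"
    unfolding V'_def E'_def using nb3_v[OF EV v dist u1 u2 u3 u4] .
  have nu1: "nb V' E' u1 = {u2, v}"
    unfolding V'_def E'_def using nb3_u1[OF EV v dist u1 u2 u3 u4] .
  have nu2: "nb V' E' u2 = {u1, u3}"
    unfolding V'_def E'_def using nb3_u2[OF EV v dist u1 u2 u3 u4] .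
  have nu3: "nb V' E' u3 = {u2, u4}"
    unfolding V'_def E'_def using nb3_u3[OF EV v dist u1 u2 u3 u4] .
  have nu4: "nb V' E' u4 = {u3}"
    unfolding V'_def E'_def using nb3_u4[OF EV v dist u1 u2 u3 u4] .
  have sub1: "nb V' E' z \<subseteq> insert u1 (nb V E z)" if "z \<in> V" for z
    using nold nv0 that by (cases "z = v") auto
  have sub2: "nb V E z \<subseteq> nb V' E' z" if "z \<in> V" for z
    using nold nv0 that by (cases "z = v") auto
  have Sold: "S' z = S z" if "z \<in> V" for z unfolding S'_def using that u1 u2 u3 u4 by auto
  have Su: "S' u1 = SD" "S' u2 = SB" "S' u3 = SA" "S' u4 = SC" unfolding S'_def using dist by auto
  have uv: "u1 \<noteq> v" "u2 \<noteq> v" "u3 \<noteq> v" "u4 \<noteq> v" using u1 u2 u3 u4 v by auto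
  have nbV: "nb V E z \<subseteq> V" for z by (rule nb_sub)
  have memV': "z \<in> V' \<longleftrightarrow> z \<in> V \<or> z = u1 \<or> z = u2 \<or> z = u3 \<or> z = u4" for z unfolding V'_def by blast
  have unb: "u1 \<notin> nb V E z" "u2 \<notin> nb V E z" "u3 \<notin> nb V E z" "u4 \<notin> nb V E z" for z
    using u1 u2 u3 u4 nbV by blast+
  have "card (nb V E v) = 1" using dv unfolding deg_nb .
  then obtain x where nvx: "nb V E v = {x}" using card_1_singletonE by blast
  have xV: "x \<in> V" using nvx nbV by blast
  have Sx: "S x = SA" using iC v Sv nvx unfolding invC_def by auto
  have xv: "x \<noteq> v" using Sx Sv by auto
  have vx: "v \<in> nb V E x" using nb_sym[of x V E v] nvx v by simp
  have nv: "nb V' E' v = {x, u1}" using nv0 nvx by auto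
  have uqx: "\<forall>z1\<in>nb V E x. \<forall>z2\<in>nb V E x. S z1 = SC \<longrightarrow> S z2 = SC \<longrightarrow> z1 = z2"
    and LXx: "(\<exists>c. goodL V E S x c) \<or> (\<exists>c d b. goodX V E S x c d b)"
    using iA xV Sx unfolding invA_def by auto
  have cardx: "card (nb V E x - {v}) \<le> 1"
    using LXx
  proof
    assume "\<exists>c. goodL V E S x c"
    then obtain c where "c \<in> nb V E x" "S c = SC" "card (nb V E x - {c}) \<le> 1" unfolding goodL_def by auto
    moreover hence "c = v" using uqx vx Sv by blast
    ultimately show ?thesis by simp
  next
    assume "\<exists>c d b. goodX V E S x c d b"
    then obtain c d where cd: "c \<in> nb V E x" "S c = SC" "nb V E c = {x,d}" "S d = SD" unfolding goodX_def by auto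
    hence "c = v" using uqx vx Sv by blast
    hence "nb V E v = {x,d}" using cd by simp
    hence "d = x" using nvx by auto
    thus ?thesis using cd(4) Sx by simp
  qed
  have iA': "invA V' E' S'" unfolding invA_def
  proof (intro ballI impI)
    fix y assume yV': "y \<in> V'" and yA: "S' y = SA"
    show "(\<forall>z1\<in>nb V' E' y. \<forall>z2\<in>nb V' E' y. S' z1 = SC \<longrightarrow> S' z2 = SC \<longrightarrow> z1 = z2) \<and>
         ((\<exists>c. goodL V' E' S' y c) \<or> (\<exists>c d b. goodX V' E' S' y c d b))"
    proof (cases "y \<in> V")
      case False
      hence "y = u3" using yV' yA Su memV' by auto
      have uq: "\<forall>z1\<in>nb V' E' y. \<forall>z2\<in>nb V' E' y. S' z1 = SC \<longrightarrow> S' z2 = SC \<longrightarrow> z1 = z2"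
        using \<open>y = u3\<close> nu3 Su by auto
      have "card ({u2, u4} - {u4}) \<le> 1" using dist by simp
      hence "goodL V' E' S' y u4" unfolding goodL_def using \<open>y = u3\<close> nu3 nu4 Su by simp
      thus ?thesis using uq by blast
    next
      case True
      have yA0: "S y = SA" using yA Sold[OF True] by simp
      have uq0: "\<forall>z1\<in>nb V E y. \<forall>z2\<in>nb V E y. S z1 = SC \<longrightarrow> S z2 = SC \<longrightarrow> z1 = z2"
        and LX: "(\<exists>c. goodL V E S y c) \<or> (\<exists>c d b. goodX V E S y c d b)"
        using iA True yA0 unfolding invA_def by auto
      have yv: "y \<noteq> v" using yA0 Sv by auto
      have ny: "nb V' E' y = nb V E y" using nold[OF True yv] .
      have uq: "\<forall>z1\<in>nb V' E' y. \<forall>z2\<in>nb V' E' y. S' z1 = SC \<longrightarrow> S' z2 = SC \<longrightarrow> z1 = z2"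
      proof (intro ballI impI)
        fix z1 z2 assume z: "z1 \<in> nb V' E' y" "z2 \<in> nb V' E' y" "S' z1 = SC" "S' z2 = SC"
        have "z1 \<in> nb V E y" "z2 \<in> nb V E y" using z ny by auto
        moreover have "S z1 = SC" "S z2 = SC" using z(3,4) Sold nbV calculation by (metis subsetD)+
        ultimately show "z1 = z2" using uq0 by blast
      qed
      show ?thesis
      proof (cases "y = x")
        case True
        have "goodX V' E' S' y v u1 u2" unfolding goodX_def
          using True ny vx Sold[OF v] Sv nv nu1 Su cardx by (auto simp: insert_commute)
        thus ?thesis using uq by blast
      next
        case yx: False
        have cnv: "c \<noteq> v" if "c \<in> nb V E y" for c
        proof
          assume "c = v"
          hence "y \<in> nb V E v" using nb_sym[OF that True] by simp
          thus False using nvx yx by simp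
        qed
        from LX show ?thesis
        proof
          assume "\<exists>c. goodL V E S y c"
          then obtain c where g: "goodL V E S y c" by blast
          have g': "c \<in> nb V E y" "S c = SC" "nb V E c = {y}" "card (nb V E y - {c}) \<le> 1"
            using g unfolding goodL_def by auto
          have cV: "c \<in> V" using g'(1) nbV by blast
          have "goodL V' E' S' y c" unfolding goodL_def
            using g' ny nold[OF cV cnv[OF g'(1)]] Sold[OF cV] by simp
          thus ?thesis using uq by blast
        next
          assume "\<exists>c d b. goodX V E S y c d b"
          then obtain c d b where g: "goodX V E S y c d b" by blast
          have g': "c \<in> nb V E y" "S c = SC" "nb V E c = {y,d}" "nb V E d = {c,b}" "S d = SD" "S b = SB"
            "card (nb V E y - {c}) \<le> 1 \<or> card (nb V E b - {d}) \<le> 1"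
            using g unfolding goodX_def by auto
          have cV: "c \<in> V" using g'(1) nbV by blast
          have dV: "d \<in> V" using g'(3) nbV by blast
          have bV: "b \<in> V" using g'(4) nbV by blast
          have dv: "d \<noteq> v" using g'(5) Sv by auto
          have bv: "b \<noteq> v" using g'(6) Sv by auto
          have "goodX V' E' S' y c d b" unfolding goodX_def
            using g' ny nold[OF cV cnv[OF g'(1)]] nold[OF dV dv] nold[OF bV bv] Sold[OF cV] Sold[OF dV] Sold[OF bV]
            by simp
          thus ?thesis using uq by blast
        qed
      qed
    qed
  qed
  have iB': "invB V' E' S'" unfolding invB_def
  proof (intro ballI impI)
    fix b assume bV': "b \<in> V'" and bB: "S' b = SB"
    show "(\<exists>a\<in>nb V' E' b. S' a = SA) \<and>
         (\<forall>d1\<in>nb V' E' b. \<forall>d2\<in>nb V' E' b. S' d1 = SD \<longrightarrow> S' d2 = SD \<longrightarrow> d1 = d2)"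
    proof (cases "b \<in> V")
      case False
      hence "b = u2" using bV' bB Su memV' by auto
      thus ?thesis using nu2 Su by auto
    next
      case bV: True
      have bB0: "S b = SB" using bB Sold[OF bV] by simp
      have bv: "b \<noteq> v" using bB0 Sv by auto
      have nbb: "nb V' E' b = nb V E b" using nold[OF bV bv] .
      obtain a where a: "a \<in> nb V E b" "S a = SA" using iB bV bB0 unfolding invB_def by blast
      have aV: "a \<in> V" using a(1) nbV by blast
      have ex: "\<exists>a\<in>nb V' E' b. S' a = SA" using a nbb Sold[OF aV] by auto
      have "\<forall>d1\<in>nb V' E' b. \<forall>d2\<in>nb V' E' b. S' d1 = SD \<longrightarrow> S' d2 = SD \<longrightarrow> d1 = d2"
      proof (intro ballI impI)
        fix d1 d2 assume z: "d1 \<in> nb V' E' b" "d2 \<in> nb V' E' b" "S' d1 = SD" "S' d2 = SD"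
        have "d1 \<in> nb V E b" "d2 \<in> nb V E b" using z nbb by auto
        moreover have "S d1 = SD" "S d2 = SD" using z(3,4) Sold nbV calculation by (metis subsetD)+
        ultimately show "d1 = d2" using iB bV bB0 unfolding invB_def by blast
      qed
      thus ?thesis using ex by blast
    qed
  qed
  have iC': "invC V' E' S'" unfolding invC_def
  proof (intro ballI impI)
    fix c assume cV': "c \<in> V'" and cC: "S' c = SC"
    show "\<exists>x\<in>nb V' E' c. S' x = SA"
    proof (cases "c \<in> V")
      case True
      obtain a where a: "a \<in> nb V E c" "S a = SA" using iC True cC Sold[OF True] unfolding invC_def by auto
      have aV: "a \<in> V" using a(1) nbV by blast
      show ?thesis using a sub2[OF True] Sold[OF aV] by auto
    next
      case False
      hence "c = u4" using cV' cC Su memV' by auto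
      thus ?thesis using nu4 Su by simp
    qed
  qed
  have iD': "invD V' E' S'" unfolding invD_def
  proof (intro ballI impI)
    fix d assume dV': "d \<in> V'" and dD: "S' d = SD"
    show "\<exists>c b x a. nb V' E' d = {c,b} \<and> S' c = SC \<and> S' b = SB \<and>
      x \<in> nb V' E' c \<and> a \<in> nb V' E' b \<and> S' x = SA \<and> S' a = SA \<and> x \<noteq> a"
    proof (cases "d \<in> V")
      case False
      hence "d = u1" using dV' dD Su memV' by auto
      have "nb V' E' d = {v, u2}" using \<open>d = u1\<close> nu1 by auto
      moreover have "x \<in> nb V' E' v" "u3 \<in> nb V' E' u2" using nv nu2 by auto
      moreover have "S' v = SC" "S' x = SA" using Sold v xV Sv Sx by auto
      moreover have "x \<noteq> u3" using xV u3 by blast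
      ultimately show ?thesis using Su by blast
    next
      case dV: True
      have dD0: "S d = SD" using dD Sold[OF dV] by simp
      obtain c b x a where h: "nb V E d = {c,b}" "S c = SC" "S b = SB"
        "x \<in> nb V E c" "a \<in> nb V E b" "S x = SA" "S a = SA" "x \<noteq> a"
        using iD dV dD0 unfolding invD_def by blast
      have dv: "d \<noteq> v" using dD0 Sv by auto
      have cV: "c \<in> V" and bV: "b \<in> V" using h(1) nbV by auto
      have xV: "x \<in> V" using h(4) nbV by blast
      have aV: "a \<in> V" using h(5) nbV by blast
      have "nb V' E' d = {c,b}" "S' c = SC" "S' b = SB" "x \<in> nb V' E' c" "a \<in> nb V' E' b" "S' x = SA" "S' a = SA"
        using h nold[OF dV dv] Sold cV bV xV aV sub2[OF cV] sub2[OF bV] by auto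
      thus ?thesis using h(8) by blast
    qed
  qed
  have iDeg': "invDeg V' E' S'" unfolding invDeg_def
  proof (intro ballI impI)
    fix z assume zV': "z \<in> V'" and zC: "S' z \<noteq> SC"
    show "2 \<le> card (nb V' E' z)"
    proof (cases "z \<in> V")
      case True
      have "2 \<le> card (nb V E z)" using iDeg True zC Sold[OF True] unfolding invDeg_def by auto
      moreover have "card (nb V E z) \<le> card (nb V' E' z)"
        using sub2[OF True] nb_fin[OF fin'] by (rule card_mono[rotated])
      ultimately show ?thesis by simp
    next
      case False
      hence "z = u1 \<or> z = u2 \<or> z = u3" using zV' zC Su memV' by auto
      thus ?thesis using nu1 nu2 nu3 uv dist by auto
    qed
  qed
  have LV: "leaves V E \<subseteq> V" unfolding leaves_def by auto
  have SpV: "supports V E \<subseteq> V" unfolding supports_def by auto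
  have vL: "v \<in> leaves V E" using nvx v by (simp add: leaves_nb)
  have xnL: "x \<notin> leaves V E"
  proof -
    have "2 \<le> card (nb V E x)" using iDeg xV Sx unfolding invDeg_def by auto
    thus ?thesis by (simp add: leaves_nb)
  qed
  have L': "leaves V' E' = insert u4 (leaves V E - {v})"
  proof (rule set_eqI)
    fix z
    show "z \<in> leaves V' E' \<longleftrightarrow> z \<in> insert u4 (leaves V E - {v})"
    proof (cases "z \<in> V")
      case zV: True
      show ?thesis
      proof (cases "z = v")
        case True
        have "x \<noteq> u1" using xV u1 by blast
        hence "card (nb V' E' v) = 2" using nv by simp
        hence "v \<notin> leaves V' E'" by (simp add: leaves_nb)
        moreover have "v \<notin> insert u4 (leaves V E - {v})" using uv by simp
        ultimately show ?thesis using True by blast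
      next
        case False
        have "z \<noteq> u4" using zV u4 by blast
        moreover have "z \<in> V'" using memV' zV by blast
        ultimately show ?thesis using nold[OF zV False] zV False by (simp add: leaves_nb)
      qed
    next
      case False
      have "u1 \<notin> leaves V' E'" using nu1 dist uv by (simp add: leaves_nb)
      moreover have "u2 \<notin> leaves V' E'" using nu2 dist by (simp add: leaves_nb)
      moreover have "u3 \<notin> leaves V' E'" using nu3 dist by (simp add: leaves_nb)
      moreover have "u4 \<in> leaves V' E'" using nu4 memV' by (simp add: leaves_nb)
      moreover have "z \<notin> leaves V E" using False LV by blast
      moreover have "z \<notin> V' \<Longrightarrow> z \<notin> leaves V' E'" by (simp add: leaves_nb)
      ultimately show ?thesis using False memV' dist by auto
    qed
  qed
  have Sp': "supports V' E' = insert u3 (supports V E - {x})"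
  proof (rule set_eqI)
    fix z
    show "z \<in> supports V' E' \<longleftrightarrow> z \<in> insert u3 (supports V E - {x})"
    proof (cases "z \<in> V")
      case zV: True
      have zV': "z \<in> V'" using memV' zV by blast
      have zu: "z \<noteq> u3" using zV u3 by blast
      show ?thesis
      proof (cases "z = v")
        case True
        have "nb V' E' v \<inter> leaves V' E' = {}" unfolding nv L' using xnL uv xv dist u4 xV u1 LV by auto
        moreover have "nb V E v \<inter> leaves V E = {}" using nvx xnL by auto
        ultimately show ?thesis unfolding supports_nb using True zu by simp
      next
        case zv: False
        show ?thesis
        proof (cases "z = x")
          case True
          have "nb V E x \<inter> (leaves V E - {v}) = {}"
          proof (rule ccontr)
            assume "nb V E x \<inter> (leaves V E - {v}) \<noteq> {}"
            then obtain l where l: "l \<in> nb V E x" "l \<in> leaves V E" "l \<noteq> v" by blast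
            have lV: "l \<in> V" using l(2) LV by blast
            have "card (nb V E l) = 1" using l(2) by (simp add: leaves_nb)
            hence "S l = SC" using iDeg lV unfolding invDeg_def by fastforce
            thus False using uqx l(1,3) vx Sv by blast
          qed
          hence "nb V' E' x \<inter> leaves V' E' = {}" unfolding nold[OF xV xv] L' using unb by blast
          thus ?thesis unfolding supports_nb using True zu by simp
        next
          case zx: False
          have "v \<notin> nb V E z"
          proof
            assume "v \<in> nb V E z"
            hence "z \<in> nb V E v" using nb_sym zV by metis
            thus False using nvx zx by simp
          qed
          hence "nb V' E' z \<inter> leaves V' E' = nb V E z \<inter> leaves V E"
            unfolding nold[OF zV zv] L' using unb by blast
          thus ?thesis unfolding supports_nb using zV zV' zu zx by simp
        qed
      qed
    next
      case False
      have "u3 \<in> supports V' E'" using nu3 L' memV' by (simp add: supports_nb)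
      moreover have "u1 \<notin> supports V' E'"
      proof -
        have "{u2, v} \<inter> insert u4 (leaves V E - {v}) = {}" using dist u2 u4 uv LV by auto
        thus ?thesis using nu1 L' by (simp add: supports_nb)
      qed
      moreover have "u2 \<notin> supports V' E'"
      proof -
        have "{u1, u3} \<inter> insert u4 (leaves V E - {v}) = {}" using dist u1 u3 u4 uv LV by auto
        thus ?thesis using nu2 L' by (simp add: supports_nb)
      qed
      moreover have "u4 \<notin> supports V' E'"
      proof -
        have "{u3} \<inter> insert u4 (leaves V E - {v}) = {}" using dist u3 u4 uv LV by auto
        thus ?thesis using nu4 L' by (simp add: supports_nb)
      qed
      moreover have "z \<notin> supports V E" using False SpV by blast
      moreover have "z \<notin> V' \<Longrightarrow> z \<notin> supports V' E'" by (simp add: supports_nb)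
      ultimately show ?thesis using False memV' dist by auto
    qed
  qed
  have A': "{y\<in>V'. S' y = SA} = insert u3 {y\<in>V. S y = SA}"
  proof (rule set_eqI)
    fix y
    show "y \<in> {y\<in>V'. S' y = SA} \<longleftrightarrow> y \<in> insert u3 {y\<in>V. S y = SA}"
    proof (cases "y \<in> V")
      case True thus ?thesis using Sold[OF True] memV' u3 by auto
    next
      case False thus ?thesis using memV' Su by auto
    qed
  qed
  have xS: "x \<in> supports V E" using vx vL xV by (auto simp: supports_nb)
  have iCnt': "invCnt V' E' S'" unfolding invCnt_def A' L' Sp'
  proof -
    have finA: "finite {y\<in>V. S y = SA}" using fin by simp
    have "u3 \<notin> {y\<in>V. S y = SA}" using u3 by blast
    hence c1: "card (insert u3 {y\<in>V. S y = SA}) = Suc (card {y\<in>V. S y = SA})"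
      using card_insert_disjoint[OF finA] by simp
    have c2: "card V' = card V + 4"
    proof -
      have "V' = insert u1 (insert u2 (insert u3 (insert u4 V)))" unfolding V'_def by blast
      moreover have "u1 \<notin> insert u2 (insert u3 (insert u4 V))" "u2 \<notin> insert u3 (insert u4 V)"
        "u3 \<notin> insert u4 V" using u1 u2 u3 dist by auto
      ultimately show ?thesis using fin u4 by simp
    qed
    have finS: "finite (supports V E)" using finite_subset[OF SpV fin] .
    have finL: "finite (leaves V E)" using finite_subset[OF LV fin] .
    have "u3 \<notin> supports V E - {x}" using u3 SpV by blast
    hence c3: "card (insert u3 (supports V E - {x})) = card (supports V E)"
      using card_insert_disjoint[OF finite_Diff[OF finS]] card_Diff_singleton[OF xS] card_gt_0_iff finS xS
      by (metis One_nat_def Suc_pred empty_iff)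
    have "u4 \<notin> leaves V E - {v}" using u4 LV by blast
    hence c4: "card (insert u4 (leaves V E - {v})) = card (leaves V E)"
      using card_insert_disjoint[OF finite_Diff[OF finL]] card_Diff_singleton[OF vL] card_gt_0_iff finL vL
      by (metis One_nat_def Suc_pred empty_iff)
    show "4 * card (insert u3 {y \<in> V. S y = SA}) =
        card V' + card (insert u3 (supports V E - {x})) + card (insert u4 (leaves V E - {v}))"
      using iCnt c1 c2 c3 c4 unfolding invCnt_def by simp
  qed
  have "inv V' E' S'" unfolding inv_def using fin' EV' iA' iB' iC' iD' iDeg' iCnt' by (intro conjI)
  thus ?thesis unfolding V'_def E'_def S'_def .
qed


lemma T2_inv: "T2 V E S P \<Longrightarrow> inv V E S"
proof (induction rule: T2.induct)
  case (base a b c d S)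
  show ?case by (rule base_inv[OF base(1-5)])
next
  case (O2 V E S P v u1 u2)
  have c: "(S v = SB \<and> (\<exists>w\<in>V. corr_of_B V E S v w \<and> deg V E w = 2)) \<or>
               (S v = SA \<and> (\<exists>w\<in>V. corr_of_A V E S P v w \<and> deg V E w = 2))"
    using \<open>S v = SB\<close> \<open>\<exists>w\<in>V. corr_of_B V E S v w \<and> deg V E w = 2\<close> by (intro disjI1 conjI)
  show ?case by (rule pendant_inv[OF \<open>inv V E S\<close> \<open>v \<in> V\<close> \<open>u1 \<notin> V\<close> \<open>u2 \<notin> V\<close> \<open>u1 \<noteq> u2\<close> c])
next
  case (O3 V E S P v u1 u2 u3 u4)
  show ?case by (rule O3_inv[OF \<open>inv V E S\<close> \<open>v \<in> V\<close> \<open>S v = SC\<close> \<open>deg V E v = 1\<close>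
     \<open>distinct [u1, u2, u3, u4]\<close> \<open>u1 \<notin> V\<close> \<open>u2 \<notin> V\<close> \<open>u3 \<notin> V\<close> \<open>u4 \<notin> V\<close>])
next
  case (O4 V E S P v u1 u2)
  have c: "(S v = SB \<and> (\<exists>w\<in>V. corr_of_B V E S v w \<and> deg V E w = 2)) \<or>
               (S v = SA \<and> (\<exists>w\<in>V. corr_of_A V E S P v w \<and> deg V E w = 2))"
    using \<open>S v = SA\<close> \<open>\<exists>w\<in>V. corr_of_A V E S P v w \<and> deg V E w = 2\<close> by (intro disjI2 conjI)
  show ?case by (rule pendant_inv[OF \<open>inv V E S\<close> \<open>v \<in> V\<close> \<open>u1 \<notin> V\<close> \<open>u2 \<notin> V\<close> \<open>u1 \<noteq> u2\<close> c])
qed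

theorem lemma4p2:
  fixes V :: "'a set" and E :: "'a set set" and S :: "'a \<Rightarrow> status" and P :: "'a set"
  assumes "T2 V E S P"
  shows "real (gamma2d V E) =
         (real (card V) + real (card (supports V E)) + real (card (leaves V E))) / 4"
  using final[OF T2_inv[OF assms]] .

end
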